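(* Let $T=\left[\begin{smallmatrix} R & M\\ N & S\end{smallmatrix}\right]$ and $T'=\left[\begin{smallmatrix} R' & M'\\ N' & S'\end{smallmatrix}\right]$ be Morita context rings with $R,S,R',S'$ indecomposable. Then $\mathrm{Iso}_g(T,T')\subseteq\mathrm{Iso}_0(T,T')$.
   Context: All rings have an identity $1\neq 0$; a ring is indecomposable if its only central idempotents are $0$ and $1$. A Morita context $(R,S,M,N,f,g)$: rings $R,S$, an $R$-$S$-bimodule $M$, an $S$-$R$-bimodule $N$, bimodule morphisms $f:M\otimes_SN\to R$, $g:N\otimes_RM\to S$, with $[m,n]=f(m\otimes n)$, $(n,m)=g(n\otimes m)$ satisfying $[m,n]m'=m(n,m')$ and $n[m,n']=(n,m)n'$. Its Morita context ring $T$ consists of formal matrices $\left[\begin{smallmatrix} r & m\\ n & s\end{smallmatrix}\right]$ with entrywise addition and product $\left[\begin{smallmatrix} r & m\\ n & s\end{smallmatrix}\right]\left[\begin{smallmatrix} r' & m'\\ n' & s'\end{smallmatrix}\right]=\left[\begin{smallmatrix} rr'+[m,n'] & rm'+ms'\\ nr'+sn' & (n,m')+ss'\end{smallmatrix}\right]$; similarly for $T'$. Grading: $T_{-1}=\left[\begin{smallmatrix} 0 & 0\\ N & 0\end{smallmatrix}\right]$, $T_0=\left[\begin{smallmatrix} R & 0\\ 0 & S\end{smallmatrix}\right]$, $T_1=\left[\begin{smallmatrix} 0 & M\\ 0 & 0\end{smallmatrix}\right]$, $T_i=0$ otherwise. $\mathrm{Iso}_g(T,T')$ is the set of ring isomorphisms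 $\phi:T\to T'$ that are graded ($\phi(T_i)\subseteq T'_i$ for all $i$) or anti-graded ($\phi(T_i)\subseteq T'_{-i}$ for all $i$). $\mathrm{Iso}_0(T,T')=\mathrm{Iso}_0^0(T,T')\cup\mathrm{Iso}_0^1(T,T')$, where $\mathrm{Iso}_0^0(T,T')$ is the set of maps $\phi\left(\left[\begin{smallmatrix} r & m\\ n & s\end{smallmatrix}\right]\right)=\left[\begin{smallmatrix}\gamma(r) & \gamma(r)m'_0-m'_0\delta(s)+u(m)\\ n'_0\gamma(r)-\delta(s)n'_0+v(n) & \delta(s)\end{smallmatrix}\right]$ with $\gamma:R\to R'$, $\delta:S\to S'$ ring isomorphisms, $u:M\to M'$, $v:N\to N'$ additive bijections with $u(rms)=\gamma(r)u(m)\delta(s)$, $v(snr)=\delta(s)v(n)\gamma(r)$, and $m'_0\in M'$, $n'_0\in N'$ with $[m'_0,N']=0$, $(N',m'_0)=0$, $[M',n'_0]=0$, $(n'_0,M')=0$, $[u(m),v(n)]=\gamma([m,n])$, $(v(n),u(m))=\delta((n,m))$; and $\mathrm{Iso}_0^1(T,T')$ is the set of maps $\psi\left(\left[\begin{smallmatrix} r & m\\ n & s\end{smallmatrix}\right]\right)=\left[\begin{smallmatrix}\sigma(s) & m'_*\rho(r)-\sigma(s)m'_*+\nu(n)\\ \rho(r)n'_*-n'_*\sigma(s)+\mu(m) & \rho(r)\end{smallmatrix}\right]$ with $\rho:R\to S'$, $\sigma:S\to R'$ ring isomorphisms, $\mu:M\to N'$, $\nu:N\to M'$ additive bijections with $\mu(rms)=\rho(r)\mu(m)\sigma(s)$,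 $\nu(snr)=\sigma(s)\nu(n)\rho(r)$, and $m'_*\in M'$, $n'_*\in N'$ with $[m'_*,N']=0$, $(N',m'_* )=0$, $[M',n'_*]=0$, $(n'_*,M')=0$, $(\mu(m),\nu(n))=\rho([m,n])$, $[\nu(n),\mu(m)]=\sigma((n,m))$. *)

theory Defs
  imports Main
begin

text \<open>The rings R, S are the types 'r, 's (class ring_1, so 1 \<noteq> 0);
 M, N are the abelian groups 'm, 'n. lM/rM: left R-/right S-action on M,
 lN/rN: left S-/right R-action on N, bf m n = [m,n], bg n m = (n,m).\<close>

record ('r, 's, 'm, 'n) morita =
  lM :: "'r \<Rightarrow> 'm \<Rightarrow> 'm"
  rM :: "'m \<Rightarrow> 's \<Rightarrow> 'm"
  lN :: "'s \<Rightarrow> 'n \<Rightarrow> 'n"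
  rN :: "'n \<Rightarrow> 'r \<Rightarrow> 'n"
  bf :: "'m \<Rightarrow> 'n \<Rightarrow> 'r"
  bg :: "'n \<Rightarrow> 'm \<Rightarrow> 's"

definition morita_context ::
  "('r::ring_1, 's::ring_1, 'm::ab_group_add, 'n::ab_group_add) morita \<Rightarrow> bool" where
  "morita_context C \<longleftrightarrow>
    \<comment> \<open>M is an R-S-bimodule\<close>
    (\<forall>r m m'. lM C r (m + m') = lM C r m + lM C r m') \<and>
    (\<forall>r r' m. lM C (r + r') m = lM C r m + lM C r' m) \<and>
    (\<forall>r r' m. lM C (r * r') m = lM C r (lM C r' m)) \<and>
    (\<forall>m. lM C 1 m = m) \<and>
    (\<forall>m m' s. rM C (m + m') s = rM C m s + rM C m' s) \<and>
    (\<forall>m s s'. rM C m (s + s') = rM C m s + rM C m s') \<and>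
    (\<forall>m s s'. rM C m (s * s') = rM C (rM C m s) s') \<and>
    (\<forall>m. rM C m 1 = m) \<and>
    (\<forall>r m s. rM C (lM C r m) s = lM C r (rM C m s)) \<and>
    \<comment> \<open>N is an S-R-bimodule\<close>
    (\<forall>s n n'. lN C s (n + n') = lN C s n + lN C s n') \<and>
    (\<forall>s s' n. lN C (s + s') n = lN C s n + lN C s' n) \<and>
    (\<forall>s s' n. lN C (s * s') n = lN C s (lN C s' n)) \<and>
    (\<forall>n. lN C 1 n = n) \<and>
    (\<forall>n n' r. rN C (n + n') r = rN C n r + rN C n' r) \<and>
    (\<forall>n r r'. rN C n (r + r') = rN C n r + rN C n r') \<and>
    (\<forall>n r r'. rN C n (r * r') = rN C (rN C n r) r') \<and>
    (\<forall>n. rN C n 1 = n) \<and>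
    (\<forall>s n r. rN C (lN C s n) r = lN C s (rN C n r)) \<and>
    \<comment> \<open>f : M \<otimes>_S N \<rightarrow> R is an R-R-bimodule morphism\<close>
    (\<forall>m m' n. bf C (m + m') n = bf C m n + bf C m' n) \<and>
    (\<forall>m n n'. bf C m (n + n') = bf C m n + bf C m n') \<and>
    (\<forall>m s n. bf C (rM C m s) n = bf C m (lN C s n)) \<and>
    (\<forall>r m n. bf C (lM C r m) n = r * bf C m n) \<and>
    (\<forall>m n r. bf C m (rN C n r) = bf C m n * r) \<and>
    \<comment> \<open>g : N \<otimes>_R M \<rightarrow> S is an S-S-bimodule morphism\<close>
    (\<forall>n n' m. bg C (n + n') m = bg C n m + bg C n' m) \<and>
    (\<forall>n m m'. bg C n (m + m') = bg C n m + bg C n m') \<and>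
    (\<forall>n r m. bg C (rN C n r) m = bg C n (lM C r m)) \<and>
    (\<forall>s n m. bg C (lN C s n) m = s * bg C n m) \<and>
    (\<forall>n m s. bg C n (rM C m s) = bg C n m * s) \<and>
    \<comment> \<open>associativity conditions\<close>
    (\<forall>m n m'. lM C (bf C m n) m' = rM C m (bg C n m')) \<and>
    (\<forall>n m n'. rN C n (bf C m n') = lN C (bg C n m) n')"

text \<open>The Morita context ring T: elements (r,m,n,s) stand for the matrix [[r,m],[n,s]].\<close>

definition tadd :: "'r::ring_1 \<times> 'm::ab_group_add \<times> 'n::ab_group_add \<times> 's::ring_1
    \<Rightarrow> 'r \<times> 'm \<times> 'n \<times> 's \<Rightarrow> 'r \<times> 'm \<times> 'n \<times> 's" where
  "tadd x y = (case x of (r, m, n, s) \<Rightarrow> case y of (r', m', n', s') \<Rightarrow>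
     (r + r', m + m', n + n', s + s'))"

definition tmult :: "('r::ring_1, 's::ring_1, 'm::ab_group_add, 'n::ab_group_add) morita
    \<Rightarrow> 'r \<times> 'm \<times> 'n \<times> 's \<Rightarrow> 'r \<times> 'm \<times> 'n \<times> 's \<Rightarrow> 'r \<times> 'm \<times> 'n \<times> 's" where
  "tmult C x y = (case x of (r, m, n, s) \<Rightarrow> case y of (r', m', n', s') \<Rightarrow>
     (r * r' + bf C m n', lM C r m' + rM C m s', rN C n r' + lN C s n', bg C n m' + s * s'))"

definition tone :: "'r::ring_1 \<times> 'm::ab_group_add \<times> 'n::ab_group_add \<times> 's::ring_1" where
  "tone = (1, 0, 0, 1)"

definition indecomposable :: "'a::ring_1 itself \<Rightarrow> bool" where
  "indecomposable _ \<longleftrightarrow>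
     (\<forall>e::'a. e * e = e \<and> (\<forall>x. e * x = x * e) \<longrightarrow> e = 0 \<or> e = 1)"

definition ring_iso :: "('a::ring_1 \<Rightarrow> 'b::ring_1) \<Rightarrow> bool" where
  "ring_iso h \<longleftrightarrow> bij h \<and> (\<forall>x y. h (x + y) = h x + h y) \<and>
     (\<forall>x y. h (x * y) = h x * h y) \<and> h 1 = 1"

definition additive_bij :: "('a::ab_group_add \<Rightarrow> 'b::ab_group_add) \<Rightarrow> bool" where
  "additive_bij h \<longleftrightarrow> bij h \<and> (\<forall>x y. h (x + y) = h x + h y)"

definition T_iso ::
  "('r::ring_1, 's::ring_1, 'm::ab_group_add, 'n::ab_group_add) morita
   \<Rightarrow> ('r2::ring_1, 's2::ring_1, 'm2::ab_group_add, 'n2::ab_group_add) morita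
   \<Rightarrow> ('r \<times> 'm \<times> 'n \<times> 's \<Rightarrow> 'r2 \<times> 'm2 \<times> 'n2 \<times> 's2) \<Rightarrow> bool" where
  "T_iso C C' \<phi> \<longleftrightarrow> bij \<phi> \<and> (\<forall>x y. \<phi> (tadd x y) = tadd (\<phi> x) (\<phi> y)) \<and>
     (\<forall>x y. \<phi> (tmult C x y) = tmult C' (\<phi> x) (\<phi> y)) \<and> \<phi> tone = tone"

text \<open>Graded: \<phi>(T_i) \<subseteq> T'_i for i = -1, 0, 1 (other T_i are zero).
  Anti-graded: \<phi>(T_i) \<subseteq> T'_{-i}.\<close>
definition graded :: "('r::zero \<times> 'm::zero \<times> 'n::zero \<times> 's::zero \<Rightarrow> 'r2::zero \<times> 'm2::zero \<times> 'n2::zero \<times> 's2::zero) \<Rightarrow> bool" where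
  "graded \<phi> \<longleftrightarrow>
    (\<forall>n::'n. \<exists>n'. \<phi> (0::'r, 0::'m, n, 0::'s) = (0::'r2, 0::'m2, n', 0)) \<and>
    (\<forall>r s. \<exists>r' s'. \<phi> (r, 0, 0, s) = (r', 0, 0::'n2, s')) \<and>
    (\<forall>m. \<exists>m'. \<phi> (0, m, 0::'n, 0) = (0, m', 0, 0))"

definition antigraded :: "('r::zero \<times> 'm::zero \<times> 'n::zero \<times> 's::zero \<Rightarrow> 'r2::zero \<times> 'm2::zero \<times> 'n2::zero \<times> 's2::zero) \<Rightarrow> bool" where
  "antigraded \<phi> \<longleftrightarrow>
    (\<forall>n::'n. \<exists>m'. \<phi> (0::'r, 0::'m, n, 0::'s) = (0::'r2, m', 0::'n2, 0)) \<and>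
    (\<forall>r s. \<exists>r' s'. \<phi> (r, 0, 0, s) = (r', 0, 0, s')) \<and>
    (\<forall>m. \<exists>n'. \<phi> (0, m, 0::'n, 0) = (0, 0, n', 0))"

definition Iso_g ::
  "('r::ring_1, 's::ring_1, 'm::ab_group_add, 'n::ab_group_add) morita
   \<Rightarrow> ('r2::ring_1, 's2::ring_1, 'm2::ab_group_add, 'n2::ab_group_add) morita
   \<Rightarrow> ('r \<times> 'm \<times> 'n \<times> 's \<Rightarrow> 'r2 \<times> 'm2 \<times> 'n2 \<times> 's2) set" where
  "Iso_g C C' = {\<phi>. T_iso C C' \<phi> \<and> (graded \<phi> \<or> antigraded \<phi>)}"

definition Iso_0_0 ::
  "('r::ring_1, 's::ring_1, 'm::ab_group_add, 'n::ab_group_add) morita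
   \<Rightarrow> ('r2::ring_1, 's2::ring_1, 'm2::ab_group_add, 'n2::ab_group_add) morita
   \<Rightarrow> ('r \<times> 'm \<times> 'n \<times> 's \<Rightarrow> 'r2 \<times> 'm2 \<times> 'n2 \<times> 's2) set" where
  "Iso_0_0 C C' = {\<phi>. \<exists>(\<gamma>::'r \<Rightarrow> 'r2) (\<delta>::'s \<Rightarrow> 's2) (u::'m \<Rightarrow> 'm2) (v::'n \<Rightarrow> 'n2) m0 n0.
     ring_iso \<gamma> \<and> ring_iso \<delta> \<and> additive_bij u \<and> additive_bij v \<and>
     (\<forall>r m s. u (lM C r (rM C m s)) = lM C' (\<gamma> r) (rM C' (u m) (\<delta> s))) \<and>
     (\<forall>s n r. v (lN C s (rN C n r)) = lN C' (\<delta> s) (rN C' (v n) (\<gamma> r))) \<and>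
     (\<forall>n'. bf C' m0 n' = 0) \<and> (\<forall>n'. bg C' n' m0 = 0) \<and>
     (\<forall>m'. bf C' m' n0 = 0) \<and> (\<forall>m'. bg C' n0 m' = 0) \<and>
     (\<forall>m n. bf C' (u m) (v n) = \<gamma> (bf C m n)) \<and>
     (\<forall>m n. bg C' (v n) (u m) = \<delta> (bg C n m)) \<and>
     (\<forall>r m n s. \<phi> (r, m, n, s) =
        (\<gamma> r, lM C' (\<gamma> r) m0 - rM C' m0 (\<delta> s) + u m,
         rN C' n0 (\<gamma> r) - lN C' (\<delta> s) n0 + v n, \<delta> s))}"

definition Iso_0_1 ::
  "('r::ring_1, 's::ring_1, 'm::ab_group_add, 'n::ab_group_add) morita
   \<Rightarrow> ('r2::ring_1, 's2::ring_1, 'm2::ab_group_add, 'n2::ab_group_add) morita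
   \<Rightarrow> ('r \<times> 'm \<times> 'n \<times> 's \<Rightarrow> 'r2 \<times> 'm2 \<times> 'n2 \<times> 's2) set" where
  "Iso_0_1 C C' = {\<psi>. \<exists>(\<rho>::'r \<Rightarrow> 's2) (\<sigma>::'s \<Rightarrow> 'r2) (\<mu>::'m \<Rightarrow> 'n2) (\<nu>::'n \<Rightarrow> 'm2) ms ns.
     ring_iso \<rho> \<and> ring_iso \<sigma> \<and> additive_bij \<mu> \<and> additive_bij \<nu> \<and>
     (\<forall>r m s. \<mu> (lM C r (rM C m s)) = lN C' (\<rho> r) (rN C' (\<mu> m) (\<sigma> s))) \<and>
     (\<forall>s n r. \<nu> (lN C s (rN C n r)) = lM C' (\<sigma> s) (rM C' (\<nu> n) (\<rho> r))) \<and>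
     (\<forall>n'. bf C' ms n' = 0) \<and> (\<forall>n'. bg C' n' ms = 0) \<and>
     (\<forall>m'. bf C' m' ns = 0) \<and> (\<forall>m'. bg C' ns m' = 0) \<and>
     (\<forall>m n. bg C' (\<mu> m) (\<nu> n) = \<rho> (bf C m n)) \<and>
     (\<forall>m n. bf C' (\<nu> n) (\<mu> m) = \<sigma> (bg C n m)) \<and>
     (\<forall>r m n s. \<psi> (r, m, n, s) =
        (\<sigma> s, rM C' ms (\<rho> r) - lM C' (\<sigma> s) ms + \<nu> n,
         lN C' (\<rho> r) ns - rN C' ns (\<sigma> s) + \<mu> m, \<rho> r))}"

definition Iso_0 ::
  "('r::ring_1, 's::ring_1, 'm::ab_group_add, 'n::ab_group_add) morita
   \<Rightarrow> ('r2::ring_1, 's2::ring_1, 'm2::ab_group_add, 'n2::ab_group_add) morita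
   \<Rightarrow> ('r \<times> 'm \<times> 'n \<times> 's \<Rightarrow> 'r2 \<times> 'm2 \<times> 'n2 \<times> 's2) set" where
  "Iso_0 C C' = Iso_0_0 C C' \<union> Iso_0_1 C C'"

end

theory Submission
  imports Defs
begin

lemma mc_zero:
  assumes "morita_context C"
  shows "lM C r 0 = 0" "lM C 0 m = 0" "rM C m 0 = 0" "rM C 0 s = 0"
    "lN C s 0 = 0" "lN C 0 n = 0" "rN C n 0 = 0" "rN C 0 r = 0"
    "bf C 0 n = 0" "bf C m 0 = 0" "bg C 0 m = 0" "bg C n 0 = 0"
proof -
  note A = assms[unfolded morita_context_def]
  have "lM C r (0+0) = lM C r 0 + lM C r 0" using A by meson
  then show "lM C r 0 = 0" by simp
  have "lM C (0+0) m = lM C 0 m + lM C 0 m" using A by meson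
  then show "lM C 0 m = 0" by simp
  have "rM C m (0+0) = rM C m 0 + rM C m 0" using A by meson
  then show "rM C m 0 = 0" by simp
  have "rM C (0+0) s = rM C 0 s + rM C 0 s" using A by meson
  then show "rM C 0 s = 0" by simp
  have "lN C s (0+0) = lN C s 0 + lN C s 0" using A by meson
  then show "lN C s 0 = 0" by simp
  have "lN C (0+0) n = lN C 0 n + lN C 0 n" using A by meson
  then show "lN C 0 n = 0" by simp
  have "rN C n (0+0) = rN C n 0 + rN C n 0" using A by meson
  then show "rN C n 0 = 0" by simp
  have "rN C (0+0) r = rN C 0 r + rN C 0 r" using A by meson
  then show "rN C 0 r = 0" by simp
  have "bf C (0+0) n = bf C 0 n + bf C 0 n" using A by meson
  then show "bf C 0 n = 0" by simp
  have "bf C m (0+0) = bf C m 0 + bf C m 0" using A by meson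
  then show "bf C m 0 = 0" by simp
  have "bg C (0+0) m = bg C 0 m + bg C 0 m" using A by meson
  then show "bg C 0 m = 0" by simp
  have "bg C n (0+0) = bg C n 0 + bg C n 0" using A by meson
  then show "bg C n 0 = 0" by simp
qed

lemma mc_other:
  assumes "morita_context C"
  shows "lM C 1 m = m" "rM C m 1 = m" "lN C 1 n = n" "rN C n 1 = n"
    "rM C (lM C r m) s = lM C r (rM C m s)" "rN C (lN C s n) r = lN C s (rN C n r)"
  using assms unfolding morita_context_def by meson+

lemma tmult_simp: "tmult C (r,m,n,s) (r',m',n',s') =
  (r * r' + bf C m n', lM C r m' + rM C m s', rN C n r' + lN C s n', bg C n m' + s * s')"
  by (simp add: tmult_def)

lemma tadd_simp: "tadd (r,m,n,s) (r',m',n',s') = (r + r', m + m', n + n', s + s')"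
  by (simp add: tadd_def)

lemma proj:
  assumes "morita_context C"
  shows "tmult C (tmult C (1,0,0,0) y) (1,0,0,0) = (fst y,0,0,0)"
    "tmult C (tmult C (1,0,0,0) y) (0,0,0,1) = (0,fst (snd y),0,0)"
    "tmult C (tmult C (0,0,0,1) y) (1,0,0,0) = (0,0,fst (snd (snd y)),0)"
    "tmult C (tmult C (0,0,0,1) y) (0,0,0,1) = (0,0,0,snd (snd (snd y)))"
  using assms by (cases y; simp add: tmult_simp mc_zero mc_other)+

theorem corollary3p8:
  fixes C :: "('r::ring_1, 's::ring_1, 'm::ab_group_add, 'n::ab_group_add) morita"
    and C' :: "('r2::ring_1, 's2::ring_1, 'm2::ab_group_add, 'n2::ab_group_add) morita"
  assumes "morita_context C" and "morita_context C'"
    and "indecomposable TYPE('r)" and "indecomposable TYPE('s)"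
    and "indecomposable TYPE('r2)" and "indecomposable TYPE('s2)"
  shows "Iso_g C C' \<subseteq> Iso_0 C C'"
proof
  fix \<phi> assume "\<phi> \<in> Iso_g C C'"
  then have iso: "T_iso C C' \<phi>" and gr: "graded \<phi> \<or> antigraded \<phi>" by (auto simp: Iso_g_def)
  have add: "\<And>x y. \<phi> (tadd x y) = tadd (\<phi> x) (\<phi> y)" using iso unfolding T_iso_def by blast
  have mul: "\<And>x y. \<phi> (tmult C x y) = tmult C' (\<phi> x) (\<phi> y)" using iso unfolding T_iso_def by blast
  have one: "\<phi> (1,0,0,1) = (1,0,0,1)" using iso unfolding T_iso_def tone_def by blast
  have injp: "inj \<phi>" and surjp: "surj \<phi>" using iso by (auto simp: T_iso_def bij_def)
  note Z = mc_zero[OF assms(1)] mc_zero[OF assms(2)] mc_other[OF assms(1)] mc_other[OF assms(2)]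
  have diag: "\<And>r s. \<exists>r' s'. \<phi> (r,0,0,s) = (r',0,0,s')"
    using gr unfolding graded_def antigraded_def by blast
  have offM: "\<And>m. \<exists>p q. \<phi> (0,m,0,0) = (0,p,q,0)"
    using gr unfolding graded_def antigraded_def by blast
  have offN: "\<And>n. \<exists>p q. \<phi> (0,0,n,0) = (0,p,q,0)"
    using gr unfolding graded_def antigraded_def by blast
  have dec: "\<And>r m n s. (r,m,n,s) = tadd (tadd (r,0,0,0) (0,0,0,s)) (tadd (0,m,0,0) (0,0,n,0))"
    by (simp add: tadd_simp)
  have phi0: "\<phi> (0,0,0,0) = (0,0,0,0)"
  proof -
    obtain r' s' where h: "\<phi> (0,0,0,0) = (r',0,0,s')" using diag by blast
    have "\<phi> (tadd (0,0,0,0) (0,0,0,0)) = tadd (\<phi> (0,0,0,0)) (\<phi> (0,0,0,0))" by (rule add)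
    then have "(r',0,0,s') = (r'+r',0,0,s'+s')" using h by (simp add: tadd_simp)
    then show ?thesis using h by simp
  qed
  obtain a b where E: "\<phi> (1,0,0,0) = (a,0,0,b)" using diag by blast
  obtain c d where F: "\<phi> (0,0,0,1) = (c,0,0,d)" using diag by blast
  have "\<phi> (tadd (1,0,0,0) (0,0,0,1)) = tadd (\<phi> (1,0,0,0)) (\<phi> (0,0,0,1))" by (rule add)
  then have "(1,0,0,1) = (a+c,0::'m2,0::'n2,b+d)" using one E F by (simp add: tadd_simp)
  then have cd: "c = 1 - a" "d = 1 - b" by (simp_all add: eq_diff_eq add.commute)
  have "\<phi> (tmult C (1,0,0,0) (1,0,0,0)) = tmult C' (\<phi> (1,0,0,0)) (\<phi> (1,0,0,0))" by (rule mul)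
  then have idem: "a * a = a" "b * b = b" using E Z by (simp_all add: tmult_simp)
  have ca: "\<forall>x. a * x = x * a"
  proof
    fix x :: 'r2
    obtain y where y: "\<phi> y = (x,0,0,0)" using surjp by (metis surjD)
    obtain r m n s where ys: "y = (r,m,n,s)" by (cases y)
    obtain r1 s1 where h1: "\<phi> (r,0,0,0) = (r1,0,0,s1)" using diag by blast
    obtain p q where h2: "\<phi> (0,m,0,0) = (0,p,q,0)" using offM by blast
    obtain p' q' where h3: "\<phi> (0,0,n,0) = (0,p',q',0)" using offN by blast
    have "tmult C (1,0,0,0) y = tadd (r,0,0,0) (0,m,0,0)" using ys Z by (simp add: tmult_simp tadd_simp)
    then have "tmult C' (\<phi> (1,0,0,0)) (\<phi> y) = tadd (\<phi> (r,0,0,0)) (\<phi> (0,m,0,0))" by (metis mul add)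
    then have "a * x = r1" using add h1 h2 E y Z by (simp add: tmult_simp tadd_simp)
    moreover
    have "tmult C y (1,0,0,0) = tadd (r,0,0,0) (0,0,n,0)" using ys Z by (simp add: tmult_simp tadd_simp)
    then have "tmult C' (\<phi> y) (\<phi> (1,0,0,0)) = tadd (\<phi> (r,0,0,0)) (\<phi> (0,0,n,0))" by (metis mul add)
    ultimately show "a * x = x * a" using add h1 h3 E y Z by (simp add: tmult_simp tadd_simp)
  qed
  have cb: "\<forall>x. b * x = x * b"
  proof
    fix x :: 's2
    obtain y where y: "\<phi> y = (0,0,0,x)" using surjp by (metis surjD)
    obtain r m n s where ys: "y = (r,m,n,s)" by (cases y)
    obtain r1 s1 where h1: "\<phi> (r,0,0,0) = (r1,0,0,s1)" using diag by blast
    obtain p q where h2: "\<phi> (0,m,0,0) = (0,p,q,0)" using offM by blast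
    obtain p' q' where h3: "\<phi> (0,0,n,0) = (0,p',q',0)" using offN by blast
    have "tmult C (1,0,0,0) y = tadd (r,0,0,0) (0,m,0,0)" using ys Z by (simp add: tmult_simp tadd_simp)
    then have "tmult C' (\<phi> (1,0,0,0)) (\<phi> y) = tadd (\<phi> (r,0,0,0)) (\<phi> (0,m,0,0))" by (metis mul add)
    then have "b * x = s1" using add h1 h2 E y Z by (simp add: tmult_simp tadd_simp)
    moreover
    have "tmult C y (1,0,0,0) = tadd (r,0,0,0) (0,0,n,0)" using ys Z by (simp add: tmult_simp tadd_simp)
    then have "tmult C' (\<phi> y) (\<phi> (1,0,0,0)) = tadd (\<phi> (r,0,0,0)) (\<phi> (0,0,n,0))" by (metis mul add)
    ultimately show "b * x = x * b" using add h1 h3 E y Z by (simp add: tmult_simp tadd_simp)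
  qed
  have a01: "a = 0 \<or> a = 1" using assms(5) ca idem unfolding indecomposable_def by blast
  have b01: "b = 0 \<or> b = 1" using assms(6) cb idem unfolding indecomposable_def by blast
  have not00: "\<not> (a = 0 \<and> b = 0)"
  proof
    assume "a = 0 \<and> b = 0"
    then have "\<phi> (1,0,0,0) = \<phi> (0,0,0,0)" using E phi0 by simp
    then have "((1::'r),(0::'m),(0::'n),(0::'s)) = (0,0,0,0)" using injp by (simp add: inj_eq)
    then show False by simp
  qed
  have not11: "\<not> (a = 1 \<and> b = 1)"
  proof
    assume "a = 1 \<and> b = 1"
    then have "\<phi> (1,0,0,0) = \<phi> (1,0,0,1)" using E one by simp
    then have "((1::'r),(0::'m),(0::'n),(0::'s)) = (1,0,0,1)" using injp by (simp add: inj_eq)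
    then show False by simp
  qed
  have decp: "\<And>r m n s. \<phi> (r,m,n,s) = tadd (tadd (\<phi> (r,0,0,0)) (\<phi> (0,0,0,s))) (tadd (\<phi> (0,m,0,0)) (\<phi> (0,0,n,0)))"
    by (metis dec add)
  have addR: "\<And>x y. \<phi> (x+y,0,0,0) = tadd (\<phi> (x,0,0,0)) (\<phi> (y,0,0,0))"
    by (metis add tadd_simp add_0)
  have addS: "\<And>x y. \<phi> (0,0,0,x+y) = tadd (\<phi> (0,0,0,x)) (\<phi> (0,0,0,y))"
    by (metis add tadd_simp add_0)
  have addM: "\<And>x y. \<phi> (0,x+y,0,0) = tadd (\<phi> (0,x,0,0)) (\<phi> (0,y,0,0))"
    by (metis add tadd_simp add_0)
  have addN: "\<And>x y. \<phi> (0,0,x+y,0) = tadd (\<phi> (0,0,x,0)) (\<phi> (0,0,y,0))"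
    by (metis add tadd_simp add_0)
  have mulR: "\<And>x y. \<phi> (x*y,0,0,0) = tmult C' (\<phi> (x,0,0,0)) (\<phi> (y,0,0,0))"
  proof -
    fix x y :: 'r
    have "(x*y,0,0,0) = tmult C (x,0,0,0) (y,0,0,0)" using Z by (simp add: tmult_simp)
    then show "\<phi> (x*y,0,0,0) = tmult C' (\<phi> (x,0,0,0)) (\<phi> (y,0,0,0))" by (metis mul)
  qed
  have mulS: "\<And>x y. \<phi> (0,0,0,x*y) = tmult C' (\<phi> (0,0,0,x)) (\<phi> (0,0,0,y))"
  proof -
    fix x y :: 's
    have "(0,0,0,x*y) = tmult C (0,0,0,x) (0,0,0,y)" using Z by (simp add: tmult_simp)
    then show "\<phi> (0,0,0,x*y) = tmult C' (\<phi> (0,0,0,x)) (\<phi> (0,0,0,y))" by (metis mul)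
  qed
  have mulRMS: "\<And>r m s. \<phi> (0, lM C r (rM C m s),0,0) = tmult C' (tmult C' (\<phi> (r,0,0,0)) (\<phi> (0,m,0,0))) (\<phi> (0,0,0,s))"
  proof -
    fix r m s
    have "(0, lM C r (rM C m s),0,0) = tmult C (tmult C (r,0,0,0) (0,m,0,0)) (0,0,0,s)" using Z by (simp add: tmult_simp)
    then show "\<phi> (0, lM C r (rM C m s),0,0) = tmult C' (tmult C' (\<phi> (r,0,0,0)) (\<phi> (0,m,0,0))) (\<phi> (0,0,0,s))" by (metis mul)
  qed
  have mulSNR: "\<And>r n s. \<phi> (0,0, lN C s (rN C n r),0) = tmult C' (tmult C' (\<phi> (0,0,0,s)) (\<phi> (0,0,n,0))) (\<phi> (r,0,0,0))"
  proof -
    fix r n s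
    have "(0,0, lN C s (rN C n r),0) = tmult C (tmult C (0,0,0,s) (0,0,n,0)) (r,0,0,0)" using Z by (simp add: tmult_simp)
    then show "\<phi> (0,0, lN C s (rN C n r),0) = tmult C' (tmult C' (\<phi> (0,0,0,s)) (\<phi> (0,0,n,0))) (\<phi> (r,0,0,0))" by (metis mul)
  qed
  have mulMN: "\<And>m n. \<phi> (bf C m n,0,0,0) = tmult C' (\<phi> (0,m,0,0)) (\<phi> (0,0,n,0))"
  proof -
    fix m n
    have "(bf C m n,0,0,0) = tmult C (0,m,0,0) (0,0,n,0)" using Z by (simp add: tmult_simp)
    then show "\<phi> (bf C m n,0,0,0) = tmult C' (\<phi> (0,m,0,0)) (\<phi> (0,0,n,0))" by (metis mul)
  qed
  have mulNM: "\<And>m n. \<phi> (0,0,0,bg C n m) = tmult C' (\<phi> (0,0,n,0)) (\<phi> (0,m,0,0))"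
  proof -
    fix m n
    have "(0,0,0,bg C n m) = tmult C (0,0,n,0) (0,m,0,0)" using Z by (simp add: tmult_simp)
    then show "\<phi> (0,0,0,bg C n m) = tmult C' (\<phi> (0,0,n,0)) (\<phi> (0,m,0,0))" by (metis mul)
  qed
  have Pe: "\<And>x y z. \<phi> (tmult C (tmult C x y) z) = tmult C' (tmult C' (\<phi> x) (\<phi> y)) (\<phi> z)"
    by (simp add: mul)
  have src: "\<And>r m n s. tmult C (tmult C (1,0,0,0) (r,m,n,s)) (1,0,0,0) = (r,0,0,0)"
    "\<And>r m n s. tmult C (tmult C (1,0,0,0) (r,m,n,s)) (0,0,0,1) = (0,m,0,0)"
    "\<And>r m n s. tmult C (tmult C (0,0,0,1) (r,m,n,s)) (1,0,0,0) = (0,0,n,0)"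
    "\<And>r m n s. tmult C (tmult C (0,0,0,1) (r,m,n,s)) (0,0,0,1) = (0,0,0,s)"
    using proj[OF assms(1)] by simp_all
  note P' = proj[OF assms(2)]
  from a01 b01 not00 not11 have "(a = 1 \<and> b = 0) \<or> (a = 0 \<and> b = 1)" by blast
  then show "\<phi> \<in> Iso_0 C C'"
  proof
    assume ab: "a = 1 \<and> b = 0"
    have E1: "\<phi> (1,0,0,0) = (1,0,0,0)" and F1: "\<phi> (0,0,0,1) = (0,0,0,1)" using E F cd ab by simp_all
    define \<gamma> where "\<gamma> r = fst (\<phi> (r,0::'m,0::'n,0::'s))" for r
    define \<delta> where "\<delta> s = snd (snd (snd (\<phi> (0::'r,0::'m,0::'n,s))))" for s
    define u where "u m = fst (snd (\<phi> (0::'r,m,0::'n,0::'s)))" for m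
    define v where "v n = fst (snd (snd (\<phi> (0::'r,0::'m,n,0::'s))))" for n
    have hR: "\<And>r. \<phi> (r,0,0,0) = (\<gamma> r,0,0,0)"
      using Pe[of "(1,0,0,0)" "(_,0,0,0)" "(1,0,0,0)"] src(1) E1 P'(1) by (simp add: \<gamma>_def)
    have hS: "\<And>s. \<phi> (0,0,0,s) = (0,0,0,\<delta> s)"
      using Pe[of "(0,0,0,1)" "(0,0,0,_)" "(0,0,0,1)"] src(4) F1 P'(4) by (simp add: \<delta>_def)
    have hM: "\<And>m. \<phi> (0,m,0,0) = (0,u m,0,0)"
      using Pe[of "(1,0,0,0)" "(0,_,0,0)" "(0,0,0,1)"] src(2) E1 F1 P'(2) by (simp add: u_def)
    have hN: "\<And>n. \<phi> (0,0,n,0) = (0,0,v n,0)"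
      using Pe[of "(0,0,0,1)" "(0,0,_,0)" "(1,0,0,0)"] src(3) E1 F1 P'(3) by (simp add: v_def)
    have hall: "\<And>r m n s. \<phi> (r,m,n,s) = (\<gamma> r, u m, v n, \<delta> s)"
      using decp hR hS hM hN by (simp add: tadd_simp)
    have g: "ring_iso \<gamma>" unfolding ring_iso_def bij_def
    proof (intro conjI allI)
      show "inj \<gamma>"
      proof (rule injI)
        fix x y assume "\<gamma> x = \<gamma> y"
        then have "\<phi> (x,0,0,0) = \<phi> (y,0,0,0)" using hR by simp
        then show "x = y" using injp by (simp add: inj_eq)
      qed
      show "surj \<gamma>" unfolding surj_def
      proof
        fix t obtain y where y: "\<phi> y = (t,0,0,0)" using surjp by (metis surjD)
        obtain r m n s where ys: "y = (r,m,n,s)" by (cases y)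
        have "\<phi> (tmult C (tmult C (1,0,0,0) (r,m,n,s)) (1,0,0,0)) = (t,0,0,0)"
          using Pe[of "(1,0,0,0)" "(r,m,n,s)" "(1,0,0,0)"] y ys E1 P'(1) by simp
        then have "\<phi> (r,0,0,0) = (t,0,0,0)" using src(1) by simp
        then show "\<exists>x. t = \<gamma> x" using hR by (metis prod.inject)
      qed
      fix x y
      show "\<gamma> (x + y) = \<gamma> x + \<gamma> y" using addR[of x y] hR by (simp add: tadd_simp)
      show "\<gamma> (x * y) = \<gamma> x * \<gamma> y" using mulR[of x y] hR Z by (simp add: tmult_simp)
    next
      show "\<gamma> 1 = 1" using E1 hR by (metis prod.inject)
    qed
    have d: "ring_iso \<delta>" unfolding ring_iso_def bij_def
    proof (intro conjI allI)
      show "inj \<delta>"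
      proof (rule injI)
        fix x y assume "\<delta> x = \<delta> y"
        then have "\<phi> (0,0,0,x) = \<phi> (0,0,0,y)" using hS by simp
        then show "x = y" using injp by (simp add: inj_eq)
      qed
      show "surj \<delta>" unfolding surj_def
      proof
        fix t obtain y where y: "\<phi> y = (0,0,0,t)" using surjp by (metis surjD)
        obtain r m n s where ys: "y = (r,m,n,s)" by (cases y)
        have "\<phi> (tmult C (tmult C (0,0,0,1) (r,m,n,s)) (0,0,0,1)) = (0,0,0,t)"
          using Pe[of "(0,0,0,1)" "(r,m,n,s)" "(0,0,0,1)"] y ys F1 P'(4) by simp
        then have "\<phi> (0,0,0,s) = (0,0,0,t)" using src(4) by simp
        then show "\<exists>x. t = \<delta> x" using hS by (metis prod.inject)
      qed
      fix x y
      show "\<delta> (x + y) = \<delta> x + \<delta> y" using addS[of x y] hS by (simp add: tadd_simp)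
      show "\<delta> (x * y) = \<delta> x * \<delta> y" using mulS[of x y] hS Z by (simp add: tmult_simp)
    next
      show "\<delta> 1 = 1" using F1 hS by (metis prod.inject)
    qed
    have uu: "additive_bij u" unfolding additive_bij_def bij_def
    proof (intro conjI allI)
      show "inj u"
      proof (rule injI)
        fix x y assume "u x = u y"
        then have "\<phi> (0,x,0,0) = \<phi> (0,y,0,0)" using hM by simp
        then show "x = y" using injp by (simp add: inj_eq)
      qed
      show "surj u" unfolding surj_def
      proof
        fix t obtain y where y: "\<phi> y = (0,t,0,0)" using surjp by (metis surjD)
        obtain r m n s where ys: "y = (r,m,n,s)" by (cases y)
        have "\<phi> (tmult C (tmult C (1,0,0,0) (r,m,n,s)) (0,0,0,1)) = (0,t,0,0)"
          using Pe[of "(1,0,0,0)" "(r,m,n,s)" "(0,0,0,1)"] y ys E1 F1 P'(2) by simp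
        then have "\<phi> (0,m,0,0) = (0,t,0,0)" using src(2) by simp
        then show "\<exists>x. t = u x" using hM by (metis prod.inject)
      qed
      fix x y
      show "u (x + y) = u x + u y" using addM[of x y] hM by (simp add: tadd_simp)
    qed
    have vv: "additive_bij v" unfolding additive_bij_def bij_def
    proof (intro conjI allI)
      show "inj v"
      proof (rule injI)
        fix x y assume "v x = v y"
        then have "\<phi> (0,0,x,0) = \<phi> (0,0,y,0)" using hN by simp
        then show "x = y" using injp by (simp add: inj_eq)
      qed
      show "surj v" unfolding surj_def
      proof
        fix t obtain y where y: "\<phi> y = (0,0,t,0)" using surjp by (metis surjD)
        obtain r m n s where ys: "y = (r,m,n,s)" by (cases y)
        have "\<phi> (tmult C (tmult C (0,0,0,1) (r,m,n,s)) (1,0,0,0)) = (0,0,t,0)"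
          using Pe[of "(0,0,0,1)" "(r,m,n,s)" "(1,0,0,0)"] y ys E1 F1 P'(3) by simp
        then have "\<phi> (0,0,n,0) = (0,0,t,0)" using src(3) by simp
        then show "\<exists>x. t = v x" using hN by (metis prod.inject)
      qed
      fix x y
      show "v (x + y) = v x + v y" using addN[of x y] hN by (simp add: tadd_simp)
    qed
    have cu: "\<And>r m s. u (lM C r (rM C m s)) = lM C' (\<gamma> r) (rM C' (u m) (\<delta> s))"
      using mulRMS hR hM hS Z by (simp add: tmult_simp)
    have cv: "\<And>s n r. v (lN C s (rN C n r)) = lN C' (\<delta> s) (rN C' (v n) (\<gamma> r))"
      using mulSNR hR hN hS Z by (simp add: tmult_simp)
    have cf: "\<And>m n. bf C' (u m) (v n) = \<gamma> (bf C m n)"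
      using mulMN hR hM hN Z by (simp add: tmult_simp)
    have cg: "\<And>m n. bg C' (v n) (u m) = \<delta> (bg C n m)"
      using mulNM hS hM hN Z by (simp add: tmult_simp)
    have "\<phi> \<in> Iso_0_0 C C'" unfolding Iso_0_0_def
      apply (rule CollectI)
      apply (rule exI[of _ \<gamma>], rule exI[of _ \<delta>], rule exI[of _ u], rule exI[of _ v], rule exI[of _ 0], rule exI[of _ 0])
      using g d uu vv cu cv cf cg hall Z by simp
    then show ?thesis by (simp add: Iso_0_def)
  next
    assume ab: "a = 0 \<and> b = 1"
    have E1: "\<phi> (1,0,0,0) = (0,0,0,1)" and F1: "\<phi> (0,0,0,1) = (1,0,0,0)" using E F cd ab by simp_all
    define \<rho> where "\<rho> r = snd (snd (snd (\<phi> (r,0::'m,0::'n,0::'s))))" for r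
    define \<sigma> where "\<sigma> s = fst (\<phi> (0::'r,0::'m,0::'n,s))" for s
    define \<mu> where "\<mu> m = fst (snd (snd (\<phi> (0::'r,m,0::'n,0::'s))))" for m
    define \<nu> where "\<nu> n = fst (snd (\<phi> (0::'r,0::'m,n,0::'s)))" for n
    have hR: "\<And>r. \<phi> (r,0,0,0) = (0,0,0,\<rho> r)"
      using Pe[of "(1,0,0,0)" "(_,0,0,0)" "(1,0,0,0)"] src(1) E1 P'(4) by (simp add: \<rho>_def)
    have hS: "\<And>s. \<phi> (0,0,0,s) = (\<sigma> s,0,0,0)"
      using Pe[of "(0,0,0,1)" "(0,0,0,_)" "(0,0,0,1)"] src(4) F1 P'(1) by (simp add: \<sigma>_def)
    have hM: "\<And>m. \<phi> (0,m,0,0) = (0,0,\<mu> m,0)"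
      using Pe[of "(1,0,0,0)" "(0,_,0,0)" "(0,0,0,1)"] src(2) E1 F1 P'(3) by (simp add: \<mu>_def)
    have hN: "\<And>n. \<phi> (0,0,n,0) = (0,\<nu> n,0,0)"
      using Pe[of "(0,0,0,1)" "(0,0,_,0)" "(1,0,0,0)"] src(3) E1 F1 P'(2) by (simp add: \<nu>_def)
    have hall: "\<And>r m n s. \<phi> (r,m,n,s) = (\<sigma> s, \<nu> n, \<mu> m, \<rho> r)"
      using decp hR hS hM hN by (simp add: tadd_simp)
    have g: "ring_iso \<rho>" unfolding ring_iso_def bij_def
    proof (intro conjI allI)
      show "inj \<rho>"
      proof (rule injI)
        fix x y assume "\<rho> x = \<rho> y"
        then have "\<phi> (x,0,0,0) = \<phi> (y,0,0,0)" using hR by simp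
        then show "x = y" using injp by (simp add: inj_eq)
      qed
      show "surj \<rho>" unfolding surj_def
      proof
        fix t obtain y where y: "\<phi> y = (0,0,0,t)" using surjp by (metis surjD)
        obtain r m n s where ys: "y = (r,m,n,s)" by (cases y)
        have "\<phi> (tmult C (tmult C (1,0,0,0) (r,m,n,s)) (1,0,0,0)) = (0,0,0,t)"
          using Pe[of "(1,0,0,0)" "(r,m,n,s)" "(1,0,0,0)"] y ys E1 P'(4) by simp
        then have "\<phi> (r,0,0,0) = (0,0,0,t)" using src(1) by simp
        then show "\<exists>x. t = \<rho> x" using hR by (metis prod.inject)
      qed
      fix x y
      show "\<rho> (x + y) = \<rho> x + \<rho> y" using addR[of x y] hR by (simp add: tadd_simp)
      show "\<rho> (x * y) = \<rho> x * \<rho> y" using mulR[of x y] hR Z by (simp add: tmult_simp)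
    next
      show "\<rho> 1 = 1" using E1 hR by (metis prod.inject)
    qed
    have d: "ring_iso \<sigma>" unfolding ring_iso_def bij_def
    proof (intro conjI allI)
      show "inj \<sigma>"
      proof (rule injI)
        fix x y assume "\<sigma> x = \<sigma> y"
        then have "\<phi> (0,0,0,x) = \<phi> (0,0,0,y)" using hS by simp
        then show "x = y" using injp by (simp add: inj_eq)
      qed
      show "surj \<sigma>" unfolding surj_def
      proof
        fix t obtain y where y: "\<phi> y = (t,0,0,0)" using surjp by (metis surjD)
        obtain r m n s where ys: "y = (r,m,n,s)" by (cases y)
        have "\<phi> (tmult C (tmult C (0,0,0,1) (r,m,n,s)) (0,0,0,1)) = (t,0,0,0)"
          using Pe[of "(0,0,0,1)" "(r,m,n,s)" "(0,0,0,1)"] y ys F1 P'(1) by simp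
        then have "\<phi> (0,0,0,s) = (t,0,0,0)" using src(4) by simp
        then show "\<exists>x. t = \<sigma> x" using hS by (metis prod.inject)
      qed
      fix x y
      show "\<sigma> (x + y) = \<sigma> x + \<sigma> y" using addS[of x y] hS by (simp add: tadd_simp)
      show "\<sigma> (x * y) = \<sigma> x * \<sigma> y" using mulS[of x y] hS Z by (simp add: tmult_simp)
    next
      show "\<sigma> 1 = 1" using F1 hS by (metis prod.inject)
    qed
    have uu: "additive_bij \<mu>" unfolding additive_bij_def bij_def
    proof (intro conjI allI)
      show "inj \<mu>"
      proof (rule injI)
        fix x y assume "\<mu> x = \<mu> y"
        then have "\<phi> (0,x,0,0) = \<phi> (0,y,0,0)" using hM by simp
        then show "x = y" using injp by (simp add: inj_eq)
      qed
      show "surj \<mu>" unfolding surj_def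
      proof
        fix t obtain y where y: "\<phi> y = (0,0,t,0)" using surjp by (metis surjD)
        obtain r m n s where ys: "y = (r,m,n,s)" by (cases y)
        have "\<phi> (tmult C (tmult C (1,0,0,0) (r,m,n,s)) (0,0,0,1)) = (0,0,t,0)"
          using Pe[of "(1,0,0,0)" "(r,m,n,s)" "(0,0,0,1)"] y ys E1 F1 P'(3) by simp
        then have "\<phi> (0,m,0,0) = (0,0,t,0)" using src(2) by simp
        then show "\<exists>x. t = \<mu> x" using hM by (metis prod.inject)
      qed
      fix x y
      show "\<mu> (x + y) = \<mu> x + \<mu> y" using addM[of x y] hM by (simp add: tadd_simp)
    qed
    have vv: "additive_bij \<nu>" unfolding additive_bij_def bij_def
    proof (intro conjI allI)
      show "inj \<nu>"
      proof (rule injI)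
        fix x y assume "\<nu> x = \<nu> y"
        then have "\<phi> (0,0,x,0) = \<phi> (0,0,y,0)" using hN by simp
        then show "x = y" using injp by (simp add: inj_eq)
      qed
      show "surj \<nu>" unfolding surj_def
      proof
        fix t obtain y where y: "\<phi> y = (0,t,0,0)" using surjp by (metis surjD)
        obtain r m n s where ys: "y = (r,m,n,s)" by (cases y)
        have "\<phi> (tmult C (tmult C (0,0,0,1) (r,m,n,s)) (1,0,0,0)) = (0,t,0,0)"
          using Pe[of "(0,0,0,1)" "(r,m,n,s)" "(1,0,0,0)"] y ys E1 F1 P'(2) by simp
        then have "\<phi> (0,0,n,0) = (0,t,0,0)" using src(3) by simp
        then show "\<exists>x. t = \<nu> x" using hN by (metis prod.inject)
      qed
      fix x y
      show "\<nu> (x + y) = \<nu> x + \<nu> y" using addN[of x y] hN by (simp add: tadd_simp)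
    qed
    have cu: "\<And>r m s. \<mu> (lM C r (rM C m s)) = lN C' (\<rho> r) (rN C' (\<mu> m) (\<sigma> s))"
      using mulRMS hR hM hS Z by (simp add: tmult_simp)
    have cv: "\<And>s n r. \<nu> (lN C s (rN C n r)) = lM C' (\<sigma> s) (rM C' (\<nu> n) (\<rho> r))"
      using mulSNR hR hN hS Z by (simp add: tmult_simp)
    have cf: "\<And>m n. bg C' (\<mu> m) (\<nu> n) = \<rho> (bf C m n)"
      using mulMN hR hM hN Z by (simp add: tmult_simp)
    have cg: "\<And>m n. bf C' (\<nu> n) (\<mu> m) = \<sigma> (bg C n m)"
      using mulNM hS hM hN Z by (simp add: tmult_simp)
    have "\<phi> \<in> Iso_0_1 C C'" unfolding Iso_0_1_def
      apply (rule CollectI)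
      apply (rule exI[of _ \<rho>], rule exI[of _ \<sigma>], rule exI[of _ \<mu>], rule exI[of _ \<nu>], rule exI[of _ 0], rule exI[of _ 0])
      using g d uu vv cu cv cf cg hall Z by simp
    then show ?thesis by (simp add: Iso_0_def)
  qed
qed

end
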